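(* Let $P\subseteq[0,1]^d$ be a $0/1$-polytope and let $\varepsilon\in(0,1)$, $M>0$ be such that every polyhedron $K\subseteq\mathbb{R}^d$ with $P^\uparrow\subseteq K\subseteq(1-\varepsilon)P^\uparrow$ satisfies $\operatorname{xc}(K)\geq M$. Then $P^\uparrow\cap[0,1]^d$ does not admit an $\frac{\varepsilon}{d}$-LEF of size less than $M-3d$.
   Context: $P^\uparrow:=P+\mathbb{R}^d_{\geq0}$. $\operatorname{xc}(K)$ is the minimum number of facets of a polyhedron $Q$ of which $K$ is an affine image. Relative distance: for convex $A\subseteq B\subseteq\mathbb{R}^d$, $\operatorname{rdist}(A,B)=\sup_{\pi}\frac{\sup_{b\in B}\inf_{a\in A}|\pi(b)-\pi(a)|}{\sup_{a,a'\in A}|\pi(a)-\pi(a')|}$ over linear $\pi:\mathbb{R}^d\to\mathbb{R}$ (denominator $\infty$ and $0/0$ read as $0$). An $\varepsilon$-LEF of a convex set $C\subseteq\mathbb{R}^d$ is a pair $(Q,\pi)$, $Q\subseteq\mathbb{R}^\ell$ a polyhedron, $\pi:\mathbb{R}^\ell\to\mathbb{R}^d$ affine, with $C\subseteq\pi(Q)$ and $\operatorname{rdist}(C,\pi(Q))\leq\varepsilon$; its size is the number of facets of $Q$. *)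

theory Defs
  imports "HOL-Analysis.Analysis" "HOL-Library.Extended_Real"
begin

text \<open>Points of R^l are represented as functions nat => real vanishing outside {0..<l}.\<close>

definition RL :: "nat \<Rightarrow> (nat \<Rightarrow> real) set" where
  "RL l = {x. \<forall>i\<ge>l. x i = 0}"

definition dotL :: "nat \<Rightarrow> (nat \<Rightarrow> real) \<Rightarrow> (nat \<Rightarrow> real) \<Rightarrow> real" where
  "dotL l c x = (\<Sum>i<l. c i * x i)"

definition polyhedronL :: "nat \<Rightarrow> (nat \<Rightarrow> real) set \<Rightarrow> bool" where
  "polyhedronL l Q \<longleftrightarrow> (\<exists>H :: ((nat \<Rightarrow> real) \<times> real) set. finite H \<and>
      Q = {x \<in> RL l. \<forall>(c, e)\<in>H. dotL l c x \<le> e})"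

text \<open>Faces of a polyhedron (all faces of a polyhedron are exposed).\<close>
definition faceL :: "nat \<Rightarrow> (nat \<Rightarrow> real) set \<Rightarrow> (nat \<Rightarrow> real) set \<Rightarrow> bool" where
  "faceL l F Q \<longleftrightarrow> (\<exists>c e. (\<forall>x\<in>Q. dotL l c x \<le> e) \<and> F = {x \<in> Q. dotL l c x = e})"

definition facetL :: "nat \<Rightarrow> (nat \<Rightarrow> real) set \<Rightarrow> (nat \<Rightarrow> real) set \<Rightarrow> bool" where
  "facetL l F Q \<longleftrightarrow> faceL l F Q \<and> F \<noteq> {} \<and> F \<noteq> Q \<and>
     (\<forall>G. faceL l G Q \<and> G \<noteq> Q \<and> F \<subseteq> G \<longrightarrow> G = F)"

definition nfacets :: "nat \<Rightarrow> (nat \<Rightarrow> real) set \<Rightarrow> nat" where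
  "nfacets l Q = card {F. facetL l F Q}"

definition affmap :: "nat \<Rightarrow> (nat \<Rightarrow> real ^ 'd) \<Rightarrow> real ^ 'd \<Rightarrow> (nat \<Rightarrow> real) \<Rightarrow> real ^ 'd" where
  "affmap l a b x = b + (\<Sum>i<l. x i *\<^sub>R a i)"

definition xc :: "(real ^ 'd) set \<Rightarrow> nat" where
  "xc K = Inf {n. \<exists>l Q a b. polyhedronL l Q \<and> K = affmap l a b ` Q \<and> nfacets l Q = n}"

definition up :: "(real ^ 'd) set \<Rightarrow> (real ^ 'd) set" where
  "up P = {p + v | p v. p \<in> P \<and> (\<forall>i. 0 \<le> v $ i)}"

definition zero_one_polytope :: "(real ^ 'd) set \<Rightarrow> bool" where
  "zero_one_polytope P \<longleftrightarrow> (\<exists>S. finite S \<and> (\<forall>x\<in>S. \<forall>i. x $ i = 0 \<or> x $ i = 1) \<and> P = convex hull S)"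

definition rdist_ratio :: "(real ^ 'd) \<Rightarrow> (real ^ 'd) set \<Rightarrow> (real ^ 'd) set \<Rightarrow> ereal" where
  "rdist_ratio c A B =
    (let num = (SUP b\<in>B. INF a\<in>A. ereal \<bar>c \<bullet> b - c \<bullet> a\<bar>);
         den = (SUP p\<in>A \<times> A. ereal \<bar>c \<bullet> fst p - c \<bullet> snd p\<bar>)
     in if den = \<infinity> then 0
        else if den = 0 then (if num = 0 then 0 else \<infinity>)
        else num / den)"

definition rdist :: "(real ^ 'd) set \<Rightarrow> (real ^ 'd) set \<Rightarrow> ereal" where
  "rdist A B = (SUP c\<in>UNIV. rdist_ratio c A B)"

definition is_LEF :: "real \<Rightarrow> (real ^ 'd) set \<Rightarrow> nat \<Rightarrow> (nat \<Rightarrow> real) set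
    \<Rightarrow> (nat \<Rightarrow> real ^ 'd) \<Rightarrow> real ^ 'd \<Rightarrow> bool" where
  "is_LEF \<epsilon> C l Q a b \<longleftrightarrow> polyhedronL l Q \<and> C \<subseteq> affmap l a b ` Q \<and>
     rdist C (affmap l a b ` Q) \<le> ereal \<epsilon>"

end

theory Submission
  imports Defs
begin

definition PH :: "nat \<Rightarrow> ((nat \<Rightarrow> real) \<times> real) set \<Rightarrow> (nat \<Rightarrow> real) set" where
  "PH l H = {x \<in> RL l. \<forall>k\<in>H. dotL l (fst k) x \<le> snd k}"

definition cmb :: "real \<Rightarrow> (nat \<Rightarrow> real) \<Rightarrow> real \<Rightarrow> (nat \<Rightarrow> real) \<Rightarrow> (nat \<Rightarrow> real)" where
  "cmb u x v y = (\<lambda>i. u * x i + v * y i)"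

lemma dotL_cmb: "dotL l c (cmb u x v y) = u * dotL l c x + v * dotL l c y"
  by (simp add: dotL_def cmb_def algebra_simps sum.distrib sum_distrib_left)

lemma RL_cmb: "x \<in> RL l \<Longrightarrow> y \<in> RL l \<Longrightarrow> cmb u x v y \<in> RL l"
  by (simp add: RL_def cmb_def)

lemma polyhedronL_PH: "polyhedronL l Q \<longleftrightarrow> (\<exists>H. finite H \<and> Q = PH l H)"
  unfolding polyhedronL_def PH_def by (simp add: case_prod_beta)

definition imp :: "nat \<Rightarrow> (nat \<Rightarrow> real) set \<Rightarrow> ((nat \<Rightarrow> real) \<times> real) \<Rightarrow> bool" where
  "imp l Q k \<longleftrightarrow> (\<forall>x\<in>Q. dotL l (fst k) x = snd k)"

lemma strict_point_aux:
  assumes "finite J" "J \<subseteq> H" "PH l H \<noteq> {}"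
  shows "\<exists>p\<in>PH l H. \<forall>k\<in>J. \<not> imp l (PH l H) k \<longrightarrow> dotL l (fst k) p < snd k"
  using assms
proof (induction J rule: finite_induct)
  case empty
  then show ?case by auto
next
  case (insert k J)
  then obtain p where p: "p \<in> PH l H" "\<forall>k\<in>J. \<not> imp l (PH l H) k \<longrightarrow> dotL l (fst k) p < snd k"
    by auto
  show ?case
  proof (cases "imp l (PH l H) k")
    case True
    then show ?thesis using p by auto
  next
    case False
    then obtain q where q: "q \<in> PH l H" "dotL l (fst k) q \<noteq> snd k" unfolding imp_def by auto
    have kH: "k \<in> H" using insert by auto
    have qk: "dotL l (fst k) q < snd k" using q kH unfolding PH_def by force
    define m where "m = cmb (1/2) p (1/2) q"
    have mPH: "m \<in> PH l H"
    proof -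
      have "m \<in> RL l" using p q unfolding m_def PH_def by (auto intro: RL_cmb)
      moreover have "dotL l (fst k') m \<le> snd k'" if "k' \<in> H" for k'
        using p q that unfolding m_def PH_def dotL_cmb by force
      ultimately show ?thesis unfolding PH_def by auto
    qed
    have "\<forall>k'\<in>insert k J. \<not> imp l (PH l H) k' \<longrightarrow> dotL l (fst k') m < snd k'"
    proof (intro ballI impI)
      fix k' assume k': "k' \<in> insert k J" "\<not> imp l (PH l H) k'"
      have k'H: "k' \<in> H" using k' insert by auto
      have le: "dotL l (fst k') p \<le> snd k'" "dotL l (fst k') q \<le> snd k'"
        using p q k'H unfolding PH_def by auto
      show "dotL l (fst k') m < snd k'"
      proof (cases "k' = k")
        case True
        then show ?thesis using qk le unfolding m_def dotL_cmb by simp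
      next
        case False
        then have "dotL l (fst k') p < snd k'" using p k' by auto
        then show ?thesis using le unfolding m_def dotL_cmb by simp
      qed
    qed
    then show ?thesis using mPH by blast
  qed
qed

lemma strict_point:
  assumes "finite H" "PH l H \<noteq> {}"
  shows "\<exists>p\<in>PH l H. \<forall>k\<in>H. \<not> imp l (PH l H) k \<longrightarrow> dotL l (fst k) p < snd k"
  using strict_point_aux[OF assms(1) order_refl assms(2)] .


lemma dotL_neg: "dotL l (\<lambda>i. - c i) x = - dotL l c x"
  by (simp add: dotL_def sum_negf)

lemma face_char:
  assumes H: "finite H"
    and valid: "\<forall>x\<in>PH l H. dotL l c0 x \<le> e0"
    and F: "F = {x\<in>PH l H. dotL l c0 x = e0}" and Fne: "F \<noteq> {}"
  shows "F = {x\<in>PH l H. \<forall>k\<in>H. (\<forall>y\<in>F. dotL l (fst k) y = snd k) \<longrightarrow> dotL l (fst k) x = snd k}"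
proof -
  define H2 where "H2 = insert (c0,e0) (insert (\<lambda>i. - c0 i, - e0) H)"
  have FH2: "F = PH l H2"
    unfolding F H2_def PH_def using dotL_neg[of l c0] by auto
  have fH2: "finite H2" using H unfolding H2_def by auto
  obtain p where pF: "p \<in> F" and pstrict: "\<forall>k\<in>H2. \<not> imp l F k \<longrightarrow> dotL l (fst k) p < snd k"
    using strict_point[OF fH2] Fne FH2 by auto
  show ?thesis
  proof (rule set_eqI, rule iffI)
    fix x assume "x \<in> F" then show "x \<in> {x\<in>PH l H. \<forall>k\<in>H. (\<forall>y\<in>F. dotL l (fst k) y = snd k) \<longrightarrow> dotL l (fst k) x = snd k}"
      using F by auto
  next
    fix q assume q: "q \<in> {x\<in>PH l H. \<forall>k\<in>H. (\<forall>y\<in>F. dotL l (fst k) y = snd k) \<longrightarrow> dotL l (fst k) x = snd k}"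
    have pQ: "p \<in> PH l H" and pe: "dotL l c0 p = e0" using pF F by auto
    have qQ: "q \<in> PH l H" using q by auto
    define z where "z t = cmb (1 + t) p (- t) q" for t
    have ev: "\<forall>\<^sub>F t in at_right 0. \<forall>k\<in>H. dotL l (fst k) (z t) \<le> snd k"
    proof (rule eventually_ball_finite[OF H], rule ballI)
      fix k assume kH: "k \<in> H"
      show "\<forall>\<^sub>F t in at_right 0. dotL l (fst k) (z t) \<le> snd k"
      proof (cases "\<forall>y\<in>F. dotL l (fst k) y = snd k")
        case True
        then have "dotL l (fst k) q = snd k" "dotL l (fst k) p = snd k" using q kH pF by auto
        then have "dotL l (fst k) (z t) = snd k" for t
          unfolding z_def dotL_cmb by (simp add: algebra_simps)
        then show ?thesis by simp
      next
        case False
        then have "\<not> imp l F k" unfolding imp_def by auto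
        then have lt: "dotL l (fst k) p < snd k" using pstrict kH unfolding H2_def by auto
        have "((\<lambda>t. (1 + t) * dotL l (fst k) p + (- t) * dotL l (fst k) q) \<longlongrightarrow>
              (1 + 0) * dotL l (fst k) p + (- 0) * dotL l (fst k) q) (at_right 0)"
          by (intro tendsto_intros)
        then have "((\<lambda>t. dotL l (fst k) (z t)) \<longlongrightarrow> dotL l (fst k) p) (at_right 0)"
          unfolding z_def dotL_cmb by simp
        from order_tendstoD(2)[OF this lt] show ?thesis
          by (rule eventually_mono) simp
      qed
    qed
    then obtain b where b: "b > 0" "\<And>t. t > 0 \<Longrightarrow> t < b \<Longrightarrow> \<forall>k\<in>H. dotL l (fst k) (z t) \<le> snd k"
      unfolding eventually_at_right_field by auto
    define t where "t = b / 2"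
    have t: "t > 0" "t < b" using b unfolding t_def by auto
    have "z t \<in> RL l" using pQ qQ unfolding z_def PH_def by (auto intro: RL_cmb)
    then have "z t \<in> PH l H" using b(2)[OF t] unfolding PH_def by auto
    then have "dotL l c0 (z t) \<le> e0" using valid by auto
    then have "(1 + t) * e0 - t * dotL l c0 q \<le> e0" unfolding z_def dotL_cmb pe by simp
    then have "t * e0 \<le> t * dotL l c0 q" by (simp add: algebra_simps)
    then have "e0 \<le> dotL l c0 q" using t by simp
    moreover have "dotL l c0 q \<le> e0" using valid qQ by auto
    ultimately show "q \<in> F" using F qQ by auto
  qed
qed

definition TF :: "nat \<Rightarrow> (nat \<Rightarrow> real) set \<Rightarrow> ((nat \<Rightarrow> real) \<times> real) set \<Rightarrow> (nat \<Rightarrow> real) set" where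
  "TF l Q T = {x\<in>Q. \<forall>k\<in>T. dotL l (fst k) x = snd k}"

lemma faces_finite:
  assumes H: "finite H"
  shows "finite {F. faceL l F (PH l H)}"
proof -
  have "{F. faceL l F (PH l H)} \<subseteq> insert {} (TF l (PH l H) ` Pow H)"
  proof
    fix F assume "F \<in> {F. faceL l F (PH l H)}"
    then obtain c e where v: "\<forall>x\<in>PH l H. dotL l c x \<le> e" and F: "F = {x \<in> PH l H. dotL l c x = e}"
      unfolding faceL_def by auto
    show "F \<in> insert {} (TF l (PH l H) ` Pow H)"
    proof (cases "F = {}")
      case False
      have "F = TF l (PH l H) {k\<in>H. \<forall>y\<in>F. dotL l (fst k) y = snd k}"
        using face_char[OF H v F False] unfolding TF_def by auto
      then show ?thesis by blast
    qed simp
  qed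
  then show ?thesis using H by (meson finite_Pow_iff finite_imageI finite_insert finite_subset)
qed

definition Gk :: "nat \<Rightarrow> (nat \<Rightarrow> real) set \<Rightarrow> ((nat \<Rightarrow> real) \<times> real) \<Rightarrow> (nat \<Rightarrow> real) set" where
  "Gk l Q k = {x\<in>Q. dotL l (fst k) x = snd k}"

lemma Gk_face: "k \<in> H \<Longrightarrow> faceL l (Gk l (PH l H) k) (PH l H)"
  unfolding faceL_def Gk_def PH_def by blast

lemma facet_Gk:
  assumes H: "finite H" and f: "facetL l F (PH l H)"
  shows "\<exists>k\<in>H. F = Gk l (PH l H) k \<and> \<not> imp l (PH l H) k"
proof -
  obtain c e where v: "\<forall>x\<in>PH l H. dotL l c x \<le> e" and Fd: "F = {x \<in> PH l H. dotL l c x = e}"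
    using f unfolding facetL_def faceL_def by auto
  have Fne: "F \<noteq> {}" and FQ: "F \<noteq> PH l H" using f unfolding facetL_def by auto
  have Fe: "F = TF l (PH l H) {k\<in>H. \<forall>y\<in>F. dotL l (fst k) y = snd k}"
    using face_char[OF H v Fd Fne] unfolding TF_def by auto
  have "\<exists>k\<in>H. (\<forall>y\<in>F. dotL l (fst k) y = snd k) \<and> \<not> imp l (PH l H) k"
  proof (rule ccontr)
    assume "\<not> ?thesis"
    then have "TF l (PH l H) {k\<in>H. \<forall>y\<in>F. dotL l (fst k) y = snd k} = PH l H"
      unfolding TF_def imp_def by auto
    then show False using Fe FQ by simp
  qed
  then obtain k where k: "k \<in> H" "\<forall>y\<in>F. dotL l (fst k) y = snd k" "\<not> imp l (PH l H) k" by auto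
  have sub: "F \<subseteq> Gk l (PH l H) k" using k Fd unfolding Gk_def by auto
  have ne: "Gk l (PH l H) k \<noteq> PH l H" using k(3) unfolding Gk_def imp_def by auto
  have "Gk l (PH l H) k = F"
    using f Gk_face[OF k(1), of l] sub ne unfolding facetL_def by blast
  then show ?thesis using k by auto
qed

lemma facets_finite:
  assumes H: "finite H"
  shows "finite {F. facetL l F (PH l H)}"
  using faces_finite[OF H, of l] by (rule finite_subset[rotated]) (auto simp: facetL_def)

lemma facets_card_le:
  assumes H: "finite H" and S: "\<And>k. k \<in> H \<Longrightarrow> \<not> imp l (PH l H) k \<Longrightarrow> k \<in> S" and fS: "finite S"
  shows "nfacets l (PH l H) \<le> card S"
proof -
  have "{F. facetL l F (PH l H)} \<subseteq> Gk l (PH l H) ` S"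
    using facet_Gk[OF H] S by blast
  then show ?thesis unfolding nfacets_def
    by (meson card_image_le card_mono fS finite_imageI le_trans)
qed


lemma facet_repr:
  assumes H: "finite H"
  obtains H0 g where "finite H0" "\<forall>k\<in>H0. imp l (PH l H) k"
    "PH l H = {x\<in>RL l. (\<forall>k\<in>H0. dotL l (fst k) x \<le> snd k) \<and>
        (\<forall>F. facetL l F (PH l H) \<longrightarrow> dotL l (fst (g F)) x \<le> snd (g F))}"
proof -
  define Q where "Q = PH l H"
  define H0 where "H0 = {k\<in>H. imp l Q k}"
  define g where "g F = (SOME k. k \<in> H \<and> F = Gk l Q k \<and> \<not> imp l Q k)" for F
  have g: "g F \<in> H \<and> F = Gk l Q (g F) \<and> \<not> imp l Q (g F)" if "facetL l F Q" for F
    unfolding g_def by (rule someI_ex) (use facet_Gk[OF H that[unfolded Q_def]] Q_def in auto)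
  have "Q = {x\<in>RL l. (\<forall>k\<in>H0. dotL l (fst k) x \<le> snd k) \<and>
        (\<forall>F. facetL l F Q \<longrightarrow> dotL l (fst (g F)) x \<le> snd (g F))}" (is "Q = ?R")
  proof
    show "Q \<subseteq> ?R" using g unfolding Q_def H0_def PH_def by auto
  next
    show "?R \<subseteq> Q"
    proof
      fix x assume xR: "x \<in> ?R"
      show "x \<in> Q"
      proof (rule ccontr)
        assume xQ: "x \<notin> Q"
        have Qne: "Q \<noteq> {}"
        proof
          assume "Q = {}"
          then have "H0 = H" unfolding H0_def imp_def by auto
          then show False using xR xQ unfolding Q_def PH_def by auto
        qed
        obtain p where pQ: "p \<in> Q" and ps: "\<forall>k\<in>H. \<not> imp l Q k \<longrightarrow> dotL l (fst k) p < snd k"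
          using strict_point[OF H] Qne unfolding Q_def by auto
        define V where "V = {k\<in>H. dotL l (fst k) x > snd k}"
        have xRL: "x \<in> RL l" using xR by auto
        have Vne: "V \<noteq> {}" using xQ xRL unfolding V_def Q_def PH_def by force
        have fV: "finite V" using H unfolding V_def by auto
        have Vs: "dotL l (fst k) p < snd k" if "k \<in> V" for k
        proof -
          have "k \<notin> H0" using that xR unfolding V_def by force
          then show ?thesis using that ps unfolding V_def H0_def by auto
        qed
        define tt where "tt k = (snd k - dotL l (fst k) p) / (dotL l (fst k) x - dotL l (fst k) p)" for k
        define t where "t = Min (tt ` V)"
        have "t \<in> tt ` V" unfolding t_def using fV Vne by (intro Min_in) auto
        then obtain k0 where k0: "k0 \<in> V" "t = tt k0" by auto
        have tle: "t \<le> tt k" if "k \<in> V" for k unfolding t_def using fV that by auto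
        have t01: "0 < t" "t < 1"
        proof -
          have a: "dotL l (fst k0) p < snd k0" "snd k0 < dotL l (fst k0) x" using Vs k0 unfolding V_def by auto
          then show "0 < t" "t < 1" unfolding k0 tt_def by (auto simp: field_simps)
        qed
        define y where "y = cmb (1 - t) p t x"
        have pRL: "p \<in> RL l" using pQ unfolding Q_def PH_def by auto
        have yQ: "y \<in> Q"
        proof -
          have "y \<in> RL l" unfolding y_def using pRL xRL by (rule RL_cmb)
          moreover have "dotL l (fst k) y \<le> snd k" if kH: "k \<in> H" for k
          proof (cases "k \<in> V")
            case True
            have a: "dotL l (fst k) p < snd k" "snd k < dotL l (fst k) x" using Vs True unfolding V_def by auto
            have "t \<le> tt k" using tle True by auto
            then have "t * (dotL l (fst k) x - dotL l (fst k) p) \<le> snd k - dotL l (fst k) p"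
              using a unfolding tt_def by (simp add: field_simps)
            then show ?thesis unfolding y_def dotL_cmb by (simp add: algebra_simps)
          next
            case False
            then have a: "dotL l (fst k) x \<le> snd k" using kH unfolding V_def by auto
            have b: "dotL l (fst k) p \<le> snd k" using pQ kH unfolding Q_def PH_def by auto
            have "(1 - t) * dotL l (fst k) p \<le> (1 - t) * snd k" using b t01 by (intro mult_left_mono) auto
            moreover have "t * dotL l (fst k) x \<le> t * snd k" using a t01 by (intro mult_left_mono) auto
            ultimately show ?thesis unfolding y_def dotL_cmb by (simp add: algebra_simps)
          qed
          ultimately show ?thesis unfolding Q_def PH_def by auto
        qed
        have yk0: "dotL l (fst k0) y = snd k0"
        proof -
          have a: "dotL l (fst k0) p < snd k0" "snd k0 < dotL l (fst k0) x" using Vs k0 unfolding V_def by auto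
          have gen: "(1 - (e - P) / (X - P)) * P + (e - P) / (X - P) * X = e" if "P < e" "e < X" for P e X :: real
          proof -
            have "X - P \<noteq> 0" using that by simp
            have gq: "(1 - q) * P + q * X = P + q * (X - P)" for q :: real by (simp add: algebra_simps)
            have "(1 - (e - P) / (X - P)) * P + (e - P) / (X - P) * X = P + (e - P) / (X - P) * (X - P)"
              using gq[of "(e - P) / (X - P)"] .
            also have "\<dots> = e" using \<open>X - P \<noteq> 0\<close> by simp
            finally show ?thesis .
          qed
          show ?thesis unfolding y_def dotL_cmb k0 tt_def using gen[OF a] .
        qed
        have k0H: "k0 \<in> H" using k0 unfolding V_def by auto
        define S where "S = {G. faceL l G Q \<and> G \<noteq> Q \<and> Gk l Q k0 \<subseteq> G}"
        have G0S: "Gk l Q k0 \<in> S"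
        proof -
          have "Gk l Q k0 \<noteq> Q" using pQ Vs[OF k0(1)] unfolding Gk_def by (metis (mono_tags, lifting) less_irrefl mem_Collect_eq)
          then show ?thesis unfolding S_def using Gk_face[OF k0H, of l] Q_def by auto
        qed
        have fS: "finite S" using faces_finite[OF H, of l] unfolding S_def Q_def
          by (rule finite_subset[rotated]) auto
        obtain m where mS: "m \<in> S" and mmax: "\<forall>b\<in>S. m \<le> b \<longrightarrow> m = b"
          using finite_has_maximal[OF fS] G0S by blast
        have ym: "y \<in> m" using mS yQ yk0 unfolding S_def Gk_def by auto
        have fm: "facetL l m Q"
          unfolding facetL_def
        proof (intro conjI)
          show "faceL l m Q" "m \<noteq> Q" using mS unfolding S_def by auto
          show "m \<noteq> {}" using ym by auto
          show "\<forall>G. faceL l G Q \<and> G \<noteq> Q \<and> m \<subseteq> G \<longrightarrow> G = m"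
            using mS mmax unfolding S_def by blast
        qed
        from g[OF fm] have gm: "g m \<in> H" "m = Gk l Q (g m)" "\<not> imp l Q (g m)" by auto
        have "dotL l (fst (g m)) p < snd (g m)" using ps gm by auto
        moreover have "dotL l (fst (g m)) x \<le> snd (g m)" using xR fm by auto
        moreover have "dotL l (fst (g m)) y = snd (g m)" using ym gm(2) unfolding Gk_def by auto
        ultimately show False
        proof -
          assume a: "dotL l (fst (g m)) p < snd (g m)" "dotL l (fst (g m)) x \<le> snd (g m)"
            "dotL l (fst (g m)) y = snd (g m)"
          have "(1 - t) * dotL l (fst (g m)) p < (1 - t) * snd (g m)" using a t01 by auto
          moreover have "t * dotL l (fst (g m)) x \<le> t * snd (g m)" using a t01 by (intro mult_left_mono) auto
          ultimately have "dotL l (fst (g m)) y < snd (g m)" unfolding y_def dotL_cmb by (simp add: algebra_simps)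
          then show False using a by simp
        qed
      qed
    qed
  qed
  moreover have "finite H0" using H unfolding H0_def by auto
  moreover have "\<forall>k\<in>H0. imp l (PH l H) k" unfolding H0_def Q_def by auto
  ultimately show ?thesis using that unfolding Q_def by blast
qed


lemma sep_reals:
  fixes U L :: "'a \<Rightarrow> real"
  assumes "finite Pos" "finite Neg" "\<And>p n. p \<in> Pos \<Longrightarrow> n \<in> Neg \<Longrightarrow> L n \<le> U p"
  shows "\<exists>t. (\<forall>p\<in>Pos. t \<le> U p) \<and> (\<forall>n\<in>Neg. L n \<le> t)"
proof (cases "Neg = {}")
  case True
  show ?thesis
  proof (cases "Pos = {}")
    case True then show ?thesis using \<open>Neg = {}\<close> by auto
  next
    case False
    then show ?thesis using True assms by (intro exI[of _ "Min (U ` Pos)"]) auto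
  qed
next
  case False
  have "Max (L ` Neg) \<in> L ` Neg" using assms False by (intro Max_in) auto
  then obtain n0 where n0: "n0 \<in> Neg" "Max (L ` Neg) = L n0" by auto
  have "\<forall>n\<in>Neg. L n \<le> Max (L ` Neg)" using assms(2) by simp
  moreover have "\<forall>p\<in>Pos. Max (L ` Neg) \<le> U p" using n0 assms(3) by auto
  ultimately show ?thesis by blast
qed

lemma dotL_lin: "dotL m (\<lambda>i. \<alpha> * c i + \<beta> * d i) z = \<alpha> * dotL m c z + \<beta> * dotL m d z"
  by (simp add: dotL_def algebra_simps sum.distrib sum_distrib_left)

lemma dotL_upd: "dotL (Suc m) c (z(m := t)) = dotL m c z + c m * t"
  by (simp add: dotL_def)

lemma dotL_upd2: "dotL m c (z(m := t)) = dotL m c z"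
  by (simp add: dotL_def)

lemma RL_upd: "z \<in> RL m \<Longrightarrow> z(m := t) \<in> RL (Suc m)"
  by (simp add: RL_def)

lemma RL_upd0: "z \<in> RL (Suc m) \<Longrightarrow> z(m := 0) \<in> RL m"
  by (auto simp: RL_def)

lemma dotL_0: "dotL 0 c z = 0" by (simp add: dotL_def)

definition FMset :: "nat \<Rightarrow> ((nat \<Rightarrow> real) \<times> (real ^ 'd) \<times> real) set \<Rightarrow> (real ^ 'd) set" where
  "FMset m E = {y. \<exists>z\<in>RL m. \<forall>k\<in>E. dotL m (fst k) z + fst (snd k) \<bullet> y \<le> snd (snd k)}"

lemma FM_polyhedron:
  fixes E :: "((nat \<Rightarrow> real) \<times> (real ^ 'd) \<times> real) set"
  shows "finite E \<Longrightarrow> polyhedron (FMset m E)"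
proof (induction m arbitrary: E)
  case 0
  have "FMset 0 E = \<Inter> ((\<lambda>k. {y. fst (snd k) \<bullet> y \<le> snd (snd k)}) ` E)"
  proof -
    have "(\<lambda>i. 0::real) \<in> RL 0" by (simp add: RL_def)
    then show ?thesis unfolding FMset_def dotL_0 by auto
  qed
  then show ?case using 0 by (auto intro!: polyhedron_Inter polyhedron_halfspace_le)
next
  case (Suc m)
  define Z where "Z = {k\<in>E. fst k m = 0}"
  define Pos where "Pos = {k\<in>E. fst k m > 0}"
  define Neg where "Neg = {k\<in>E. fst k m < 0}"
  define cmbk where "cmbk pn = (let p = fst pn; n = snd pn; \<alpha> = - fst n m; \<beta> = fst p m in
      ((\<lambda>i. \<alpha> * fst p i + \<beta> * fst n i), \<alpha> *\<^sub>R fst (snd p) + \<beta> *\<^sub>R fst (snd n),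
       \<alpha> * snd (snd p) + \<beta> * snd (snd n)))"
    for pn :: "((nat \<Rightarrow> real) \<times> (real ^ 'd) \<times> real) \<times> ((nat \<Rightarrow> real) \<times> (real ^ 'd) \<times> real)"
  define E' where "E' = Z \<union> cmbk ` (Pos \<times> Neg)"
  have fE': "finite E'" using Suc.prems unfolding E'_def Z_def Pos_def Neg_def by auto
  have "FMset (Suc m) E = FMset m E'"
  proof (rule set_eqI)
    fix y :: "real ^ 'd"
    define r where "r k z = snd (snd k) - fst (snd k) \<bullet> y - dotL m (fst k) z" for k z
    have cmb_ok: "dotL m (fst (cmbk (p, n))) z + fst (snd (cmbk (p, n))) \<bullet> y \<le> snd (snd (cmbk (p, n)))
         \<longleftrightarrow> 0 \<le> (- fst n m) * r p z + fst p m * r n z" for p n z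
      unfolding cmbk_def Let_def r_def fst_conv snd_conv dotL_lin inner_add_left inner_scaleR_left
      by (simp add: algebra_simps)
    show "y \<in> FMset (Suc m) E \<longleftrightarrow> y \<in> FMset m E'"
    proof
      assume "y \<in> FMset (Suc m) E"
      then obtain z where z: "z \<in> RL (Suc m)" "\<forall>k\<in>E. dotL (Suc m) (fst k) z + fst (snd k) \<bullet> y \<le> snd (snd k)"
        unfolding FMset_def by auto
      define z' where "z' = z(m := 0)"
      have zz: "z = z'(m := z m)" unfolding z'_def by auto
      have z'RL: "z' \<in> RL m" using RL_upd0[OF z(1)] unfolding z'_def .
      have ck: "fst k m * z m \<le> r k z'" if "k \<in> E" for k
        using z(2) that unfolding r_def by (subst (asm) zz) (auto simp: dotL_upd)
      have "\<forall>k\<in>E'. dotL m (fst k) z' + fst (snd k) \<bullet> y \<le> snd (snd k)"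
      proof
        fix k assume "k \<in> E'"
        then consider "k \<in> Z" | p n where "p \<in> Pos" "n \<in> Neg" "k = cmbk (p, n)" unfolding E'_def by auto
        then show "dotL m (fst k) z' + fst (snd k) \<bullet> y \<le> snd (snd k)"
        proof cases
          case 1 then show ?thesis using ck[of k] unfolding Z_def r_def by auto
        next
          case 2
          have a: "fst p m * z m \<le> r p z'" "fst n m * z m \<le> r n z'" using ck 2 unfolding Pos_def Neg_def by auto
          have b: "fst p m > 0" "fst n m < 0" using 2 unfolding Pos_def Neg_def by auto
          have "(- fst n m) * (fst p m * z m) \<le> (- fst n m) * r p z'" using a b by (intro mult_left_mono) auto
          moreover have "fst p m * (fst n m * z m) \<le> fst p m * r n z'" using a b by (intro mult_left_mono) auto
          ultimately have "0 \<le> (- fst n m) * r p z' + fst p m * r n z'" by (simp add: algebra_simps)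
          then show ?thesis using cmb_ok 2 by simp
        qed
      qed
      then show "y \<in> FMset m E'" unfolding FMset_def using z'RL by auto
    next
      assume "y \<in> FMset m E'"
      then obtain z' where z': "z' \<in> RL m" "\<forall>k\<in>E'. dotL m (fst k) z' + fst (snd k) \<bullet> y \<le> snd (snd k)"
        unfolding FMset_def by auto
      define U where "U p = r p z' / fst p m" for p
      have LU: "U n \<le> U p" if "p \<in> Pos" "n \<in> Neg" for p n
      proof -
        have "cmbk (p, n) \<in> E'" using that unfolding E'_def by auto
        then have "dotL m (fst (cmbk (p, n))) z' + fst (snd (cmbk (p, n))) \<bullet> y \<le> snd (snd (cmbk (p, n)))"
          using z' by blast
        then have h: "0 \<le> (- fst n m) * r p z' + fst p m * r n z'" unfolding cmb_ok .
        have b: "fst p m > 0" "fst n m < 0" using that unfolding Pos_def Neg_def by auto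
        have "r n z' / fst n m \<le> r p z' / fst p m"
        proof -
          have "r n z' / fst n m = (r n z' * fst p m) / (fst n m * fst p m)" using b by simp
          also have "\<dots> \<le> (r p z' * (- fst n m)) / ((- fst n m) * fst p m)"
          proof -
            have "(r n z' * fst p m) / (fst n m * fst p m) = (- (r n z' * fst p m)) / ((- fst n m) * fst p m)"
              by simp
            also have "\<dots> \<le> (r p z' * (- fst n m)) / ((- fst n m) * fst p m)"
              using h b mult_neg_pos[of "fst n m" "fst p m"] by (intro divide_right_mono) (auto simp: algebra_simps)
            finally show ?thesis .
          qed
          also have "\<dots> = r p z' / fst p m" using b by simp
          finally show ?thesis .
        qed
        then show ?thesis unfolding U_def .
      qed
      have fin: "finite Pos" "finite Neg" using Suc.prems unfolding Pos_def Neg_def by auto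
      obtain t where t: "\<forall>p\<in>Pos. t \<le> U p" "\<forall>n\<in>Neg. U n \<le> t"
        using sep_reals[OF fin, of U U] LU by blast
      define z where "z = z'(m := t)"
      have "\<forall>k\<in>E. dotL (Suc m) (fst k) z + fst (snd k) \<bullet> y \<le> snd (snd k)"
      proof
        fix k assume kE: "k \<in> E"
        have "fst k m * t \<le> r k z'"
        proof (cases "fst k m = 0")
          case True
          then have "k \<in> E'" using kE unfolding E'_def Z_def by auto
          then show ?thesis using z' True unfolding r_def by auto
        next
          case False
          show ?thesis
          proof (cases "fst k m > 0")
            case True
            then have "k \<in> Pos" using kE unfolding Pos_def by auto
            then have "t \<le> r k z' / fst k m" using t unfolding U_def by blast
            then show ?thesis using True by (simp add: field_simps)
          next
            case False2: False
            then have "fst k m < 0" using False by auto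
            moreover then have "k \<in> Neg" using kE unfolding Neg_def by auto
            then have "r k z' / fst k m \<le> t" using t unfolding U_def by blast
            ultimately show ?thesis by (simp add: field_simps)
          qed
        qed
        then show "dotL (Suc m) (fst k) z + fst (snd k) \<bullet> y \<le> snd (snd k)"
          unfolding z_def dotL_upd r_def by simp
      qed
      moreover have "z \<in> RL (Suc m)" unfolding z_def using z'(1) by (rule RL_upd)
      ultimately show "y \<in> FMset (Suc m) E" unfolding FMset_def by auto
    qed
  qed
  then show ?case using Suc.IH[OF fE'] by simp
qed


lemma sum_split_nat: "(\<Sum>i<l+n. g i) = (\<Sum>i<l. g i) + (\<Sum>j<n. g (l + j))" for l n :: nat
  by (induction n) (auto simp: add.assoc)

definition liftc :: "nat \<Rightarrow> (nat \<Rightarrow> real) \<Rightarrow> (nat \<Rightarrow> real)" where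
  "liftc l c = (\<lambda>i. if i < l then c i else 0)"

lemma dotL_liftc: "dotL (l + n) (liftc l c) z = dotL l c z"
  by (simp add: dotL_def liftc_def sum_split_nat)

lemma dotL_restr: "dotL l c (liftc l z) = dotL l c z"
  by (simp add: dotL_def liftc_def)

lemma RL_liftc: "liftc l z \<in> RL l"
  by (simp add: RL_def liftc_def)

lemma liftc_RL: "x \<in> RL l \<Longrightarrow> liftc l x = x"
  by (auto simp: RL_def liftc_def)

lemma affmap_restr: "affmap l a b (liftc l z) = affmap l a b z"
  by (simp add: affmap_def liftc_def)

lemma affmap_comp: "affmap l a b x $ i = b $ i + dotL l (\<lambda>j. a j $ i) x"
  by (simp add: affmap_def dotL_def mult.commute)

lemma xc_le: "polyhedronL l Q \<Longrightarrow> K = affmap l a b ` Q \<Longrightarrow> xc K \<le> nfacets l Q"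
  unfolding xc_def Inf_nat_def by (rule Least_le) blast

lemma ifmul: "(if P then (a::real) else 0) * b = (if P then a * b else 0)" by simp

lemma construction:
  fixes a :: "nat \<Rightarrow> real ^ 'd" and b :: "real ^ 'd"
  assumes PQ: "polyhedronL l Q"
  defines "K \<equiv> {affmap l a b x + w | x w. x \<in> Q \<and> (\<forall>i. 0 \<le> affmap l a b x $ i) \<and> (\<forall>i. 0 \<le> w $ i)}"
  shows "polyhedron K \<and> xc K \<le> nfacets l Q + 2 * CARD('d)"
proof -
  define n where "n = CARD('d)"
  obtain f :: "nat \<Rightarrow> 'd" where fb: "bij_betw f {..<n} UNIV"
    using ex_bij_betw_nat_finite[of "UNIV :: 'd set"] unfolding n_def atLeast0LessThan by auto
  define finv where "finv = inv_into {..<n} f"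
  have finv1: "finv (f j) = j" if "j < n" for j
    using fb that unfolding finv_def by (simp add: bij_betw_inv_into_left)
  have finv2: "f (finv k) = k" "finv k < n" for k
  proof -
    show "f (finv k) = k" using fb unfolding finv_def by (simp add: bij_betw_inv_into_right)
    have "finv k \<in> {..<n}" using bij_betwE[OF bij_betw_inv_into[OF fb]] unfolding finv_def by blast
    then show "finv k < n" by simp
  qed
  obtain H where H: "finite H" "Q = PH l H" using PQ unfolding polyhedronL_PH by auto
  obtain H0 g where H0: "finite H0" "\<forall>k\<in>H0. imp l (PH l H) k"
    and Qr: "PH l H = {x\<in>RL l. (\<forall>k\<in>H0. dotL l (fst k) x \<le> snd k) \<and>
        (\<forall>F. facetL l F (PH l H) \<longrightarrow> dotL l (fst (g F)) x \<le> snd (g F))}"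
    by (rule facet_repr[OF H(1)])
  define FS where "FS = {F. facetL l F Q}"
  have fFS: "finite FS" unfolding FS_def H(2) by (rule facets_finite[OF H(1)])
  define m where "m = l + n"
  define H1 where "H1 = (\<lambda>k. (liftc l (fst k), snd k)) ` H0"
  define H2 where "H2 = (\<lambda>F. (liftc l (fst (g F)), snd (g F))) ` FS"
  define H3 where "H3 = (\<lambda>j. ((\<lambda>i. if i < l then - (a i $ f j) else 0), b $ f j)) ` {..<n}"
  define H4 where "H4 = (\<lambda>j. ((\<lambda>i. if i = l + j then -1::real else 0), 0::real)) ` {..<n}"
  define H' where "H' = H1 \<union> H2 \<union> H3 \<union> H4"
  define Q' where "Q' = PH m H'"
  have fH': "finite H'" unfolding H'_def H1_def H2_def H3_def H4_def using H0 fFS by auto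
  define a' where "a' i = (if i < l then a i else axis (f (i - l)) 1)" for i
  define wz where "wz z = (\<chi> k. z (l + finv k))" for z :: "nat \<Rightarrow> real"
  have affm: "affmap m a' b z = affmap l a b (liftc l z) + wz z" for z
  proof -
    have "(\<Sum>j<n. z (l + j) *\<^sub>R axis (f j) (1::real)) = wz z"
    proof (rule iffD2[OF vec_eq_iff], rule allI)
      fix k
      have "(\<Sum>j<n. z (l + j) *\<^sub>R axis (f j) (1::real)) $ k = (\<Sum>j<n. z (l + j) * (if k = f j then 1 else 0))"
        by (simp add: axis_def)
      also have "\<dots> = (\<Sum>j<n. if j = finv k then z (l + j) else 0)"
      proof (rule sum.cong[OF refl])
        fix j assume "j \<in> {..<n}"
        then have "k = f j \<longleftrightarrow> j = finv k" using finv1[of j] finv2[of k] by auto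
        then show "z (l + j) * (if k = f j then 1 else 0) = (if j = finv k then z (l + j) else 0)" by simp
      qed
      also have "\<dots> = z (l + finv k)" using finv2(2)[of k] by (simp add: sum.delta)
      finally show "(\<Sum>j<n. z (l + j) *\<^sub>R axis (f j) (1::real)) $ k = wz z $ k" unfolding wz_def by simp
    qed
    then show ?thesis
      unfolding m_def affmap_def sum_split_nat a'_def by (simp add: liftc_def)
  qed
  have H3c: "dotL m (fst ((\<lambda>j. ((\<lambda>i. if i < l then - (a i $ f j) else 0), b $ f j)) j)) z
      = b $ f j - affmap l a b z $ f j" for j z
    unfolding affmap_comp m_def by (simp add: dotL_def sum_split_nat sum_negf)
  have H4c: "dotL m (fst ((\<lambda>j. ((\<lambda>i. if i = l + j then -1::real else 0), 0::real)) j)) z = - z (l + j)"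
    if "j < n" for j z
    using that unfolding m_def by (simp add: dotL_def sum_split_nat ifmul)
  have memQ': "liftc l z \<in> Q \<and> (\<forall>i. 0 \<le> affmap l a b z $ i) \<and> (\<forall>i. 0 \<le> wz z $ i)" if zQ': "z \<in> Q'" for z
  proof (intro conjI allI)
    have zRL: "z \<in> RL m" and zc: "\<forall>k\<in>H'. dotL m (fst k) z \<le> snd k" using zQ' unfolding Q'_def PH_def by auto
    have "liftc l z \<in> PH l H"
    proof (subst Qr, intro CollectI conjI ballI allI impI)
      show "liftc l z \<in> RL l" by (rule RL_liftc)
      fix k assume "k \<in> H0"
      then have "(liftc l (fst k), snd k) \<in> H'" unfolding H'_def H1_def by auto
      then have "dotL (l + n) (liftc l (fst k)) z \<le> snd k" using zc unfolding m_def by fastforce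
      then show "dotL l (fst k) (liftc l z) \<le> snd k" unfolding dotL_liftc dotL_restr .
    next
      fix F assume "facetL l F (PH l H)"
      then have "(liftc l (fst (g F)), snd (g F)) \<in> H'" unfolding H'_def H2_def FS_def H(2) by auto
      then have "dotL (l + n) (liftc l (fst (g F))) z \<le> snd (g F)" using zc unfolding m_def by fastforce
      then show "dotL l (fst (g F)) (liftc l z) \<le> snd (g F)" unfolding dotL_liftc dotL_restr .
    qed
    then show "liftc l z \<in> Q" using H(2) by simp
    fix i
    have "(\<lambda>j. ((\<lambda>i. if i < l then - (a i $ f j) else 0), b $ f j)) (finv i) \<in> H'"
      unfolding H'_def H3_def using finv2 by auto
    then have "dotL m (fst ((\<lambda>j. ((\<lambda>i. if i < l then - (a i $ f j) else 0), b $ f j)) (finv i))) z \<le> b $ f (finv i)"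
      using zc by force
    then show "0 \<le> affmap l a b z $ i" using H3c[of "finv i" z] finv2 by simp
    have "(\<lambda>j. ((\<lambda>i. if i = l + j then -1::real else 0), 0::real)) (finv i) \<in> H'"
      unfolding H'_def H4_def using finv2 by auto
    then have "dotL m (fst ((\<lambda>j. ((\<lambda>i. if i = l + j then -1::real else 0), 0::real)) (finv i))) z \<le> 0"
      using zc by force
    then show "0 \<le> wz z $ i" using H4c[OF finv2(2), of i z] unfolding wz_def by simp
  qed
  have memQ'2: "z \<in> Q'" if A: "z \<in> RL m" "liftc l z \<in> Q" "\<forall>i. 0 \<le> affmap l a b z $ i" "\<forall>i. 0 \<le> wz z $ i" for z
  proof -
    have xc: "liftc l z \<in> PH l H" using A H(2) by simp
    have "dotL m (fst k) z \<le> snd k" if kH: "k \<in> H'" for k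
    proof -
      from kH consider "k \<in> H1" | "k \<in> H2" | "k \<in> H3" | "k \<in> H4" unfolding H'_def by auto
      then show ?thesis
      proof cases
        case 1
        then obtain k0 where k0: "k0 \<in> H0" "k = (liftc l (fst k0), snd k0)" unfolding H1_def by auto
        have "dotL l (fst k0) (liftc l z) \<le> snd k0" using xc Qr k0(1) by blast
        then show ?thesis using k0(2) unfolding m_def by (simp add: dotL_liftc dotL_restr)
      next
        case 2
        then obtain F where F: "F \<in> FS" "k = (liftc l (fst (g F)), snd (g F))" unfolding H2_def by auto
        have "facetL l F (PH l H)" using F(1) unfolding FS_def H(2) by simp
        then have "dotL l (fst (g F)) (liftc l z) \<le> snd (g F)" using xc Qr by blast
        then show ?thesis using F(2) unfolding m_def by (simp add: dotL_liftc dotL_restr)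
      next
        case 3
        then obtain j where "k = (\<lambda>j. ((\<lambda>i. if i < l then - (a i $ f j) else 0), b $ f j)) j" unfolding H3_def by auto
        then show ?thesis using H3c[of j z] A(3) by simp
      next
        case 4
        then obtain j where j: "j < n" "k = (\<lambda>j. ((\<lambda>i. if i = l + j then -1::real else 0), 0::real)) j" unfolding H4_def by auto
        have "0 \<le> wz z $ f j" using A(4) by auto
        then have "0 \<le> z (l + j)" unfolding wz_def using finv1[OF j(1)] by simp
        then show ?thesis using H4c[OF j(1), of z] j(2) by simp
      qed
    qed
    then show ?thesis unfolding Q'_def PH_def using A(1) by auto
  qed
  have Kimg: "K = affmap m a' b ` Q'"
  proof
    show "affmap m a' b ` Q' \<subseteq> K"
    proof
      fix y assume "y \<in> affmap m a' b ` Q'"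
      then obtain z where z: "z \<in> Q'" "y = affmap m a' b z" by auto
      have "liftc l z \<in> Q \<and> (\<forall>i. 0 \<le> affmap l a b (liftc l z) $ i) \<and> (\<forall>i. 0 \<le> wz z $ i)"
        using memQ'[OF z(1)] by (simp add: affmap_restr)
      then show "y \<in> K" unfolding K_def z(2) affm by blast
    qed
  next
    show "K \<subseteq> affmap m a' b ` Q'"
    proof
      fix y assume "y \<in> K"
      then obtain x w where xw: "y = affmap l a b x + w" "x \<in> Q" "\<forall>i. 0 \<le> affmap l a b x $ i" "\<forall>i. 0 \<le> w $ i"
        unfolding K_def by auto
      have xRL: "x \<in> RL l" using xw(2) H(2) unfolding PH_def by auto
      define z where "z i = (if i < l then x i else if i < l + n then w $ f (i - l) else 0)" for i
      have lz: "liftc l z = x" using xRL unfolding z_def liftc_def RL_def by auto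
      have wzz: "wz z = w" unfolding wz_def z_def using finv2 by (auto simp: vec_eq_iff)
      have zRL: "z \<in> RL m" unfolding RL_def z_def m_def by auto
      have "z \<in> Q'"
        by (rule memQ'2[OF zRL]) (use lz wzz xw affmap_restr[of l a b z] in auto)
      moreover have "y = affmap m a' b z" unfolding affm lz wzz xw(1) ..
      ultimately show "y \<in> affmap m a' b ` Q'" by auto
    qed
  qed
  have pQ': "polyhedronL m Q'" unfolding polyhedronL_PH Q'_def using fH' by auto
  have "xc K \<le> nfacets m Q'" by (rule xc_le[OF pQ' Kimg])
  also have "nfacets m Q' \<le> card (H2 \<union> H3 \<union> H4)"
    unfolding Q'_def
  proof (rule facets_card_le[OF fH'])
    show "finite (H2 \<union> H3 \<union> H4)" using fFS unfolding H2_def H3_def H4_def by auto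
    fix k assume kH: "k \<in> H'" and ni: "\<not> imp m (PH m H') k"
    have "k \<notin> H1"
    proof
      assume "k \<in> H1"
      then obtain k0 where k0: "k0 \<in> H0" "k = (liftc l (fst k0), snd k0)" unfolding H1_def by auto
      have "imp m (PH m H') k"
        unfolding imp_def
      proof
        fix z assume "z \<in> PH m H'"
        then have "liftc l z \<in> PH l H" using memQ' H(2) unfolding Q'_def by auto
        then have "dotL l (fst k0) (liftc l z) = snd k0" using H0(2) k0 unfolding imp_def by auto
        then show "dotL m (fst k) z = snd k" using k0 unfolding m_def by (simp add: dotL_liftc dotL_restr)
      qed
      then show False using ni by simp
    qed
    then show "k \<in> H2 \<union> H3 \<union> H4" using kH unfolding H'_def by auto
  qed
  also have "\<dots> \<le> card H2 + card H3 + card H4" by (meson card_Un_le add_le_mono1 le_trans)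
  also have "\<dots> \<le> nfacets l Q + n + n"
  proof -
    have "card H2 \<le> card FS" unfolding H2_def by (rule card_image_le[OF fFS])
    moreover have "card H3 \<le> n" unfolding H3_def using card_image_le[of "{..<n}"] by fastforce
    moreover have "card H4 \<le> n" unfolding H4_def using card_image_le[of "{..<n}"] by fastforce
    ultimately show ?thesis unfolding nfacets_def FS_def by linarith
  qed
  finally have xcb: "xc K \<le> nfacets l Q + 2 * CARD('d)" unfolding n_def by simp
  define E1 where "E1 = (\<lambda>k. (fst k, 0 :: real ^ 'd, snd k)) ` H'"
  define E2 where "E2 = (\<lambda>i. ((\<lambda>j. - (a' j $ i)), axis i (1::real), b $ i)) ` (UNIV :: 'd set)"
  define E3 where "E3 = (\<lambda>i. ((\<lambda>j. a' j $ i), - axis i (1::real), - (b $ i))) ` (UNIV :: 'd set)"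
  have "K = FMset m (E1 \<union> E2 \<union> E3)"
  proof -
    have "y = affmap m a' b z \<longleftrightarrow> (\<forall>k\<in>E2 \<union> E3. dotL m (fst k) z + fst (snd k) \<bullet> y \<le> snd (snd k))" for y z
    proof -
      have "y = affmap m a' b z \<longleftrightarrow> (\<forall>i. y $ i = b $ i + dotL m (\<lambda>j. a' j $ i) z)"
        by (simp add: vec_eq_iff affmap_comp)
      also have "\<dots> \<longleftrightarrow> (\<forall>i. - dotL m (\<lambda>j. a' j $ i) z + y $ i \<le> b $ i \<and> dotL m (\<lambda>j. a' j $ i) z - y $ i \<le> - b $ i)"
        by (rule all_cong1) linarith
      also have "\<dots> \<longleftrightarrow> (\<forall>k\<in>E2 \<union> E3. dotL m (fst k) z + fst (snd k) \<bullet> y \<le> snd (snd k))"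
      proof -
        have e2: "dotL m (\<lambda>j. - (a' j $ i)) z + axis i (1::real) \<bullet> y = - dotL m (\<lambda>j. a' j $ i) z + y $ i" for i
          by (simp add: dotL_neg inner_axis')
        have e3: "dotL m (\<lambda>j. a' j $ i) z + (- axis i (1::real)) \<bullet> y = dotL m (\<lambda>j. a' j $ i) z - y $ i" for i
          by (simp add: inner_axis')
        have "(\<forall>k\<in>E2 \<union> E3. dotL m (fst k) z + fst (snd k) \<bullet> y \<le> snd (snd k)) \<longleftrightarrow>
          (\<forall>i. dotL m (\<lambda>j. - (a' j $ i)) z + axis i (1::real) \<bullet> y \<le> b $ i \<and>
               dotL m (\<lambda>j. a' j $ i) z + (- axis i (1::real)) \<bullet> y \<le> - b $ i)"
        proof
          assume h: "\<forall>k\<in>E2 \<union> E3. dotL m (fst k) z + fst (snd k) \<bullet> y \<le> snd (snd k)"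
          show "\<forall>i. dotL m (\<lambda>j. - (a' j $ i)) z + axis i (1::real) \<bullet> y \<le> b $ i \<and>
               dotL m (\<lambda>j. a' j $ i) z + (- axis i (1::real)) \<bullet> y \<le> - b $ i"
          proof
            fix i
            have "((\<lambda>j. - (a' j $ i)), axis i (1::real), b $ i) \<in> E2 \<union> E3" unfolding E2_def by auto
            from bspec[OF h this] have 1: "dotL m (\<lambda>j. - (a' j $ i)) z + axis i (1::real) \<bullet> y \<le> b $ i"
              unfolding fst_conv snd_conv .
            have "((\<lambda>j. a' j $ i), - axis i (1::real), - (b $ i)) \<in> E2 \<union> E3" unfolding E3_def by auto
            from bspec[OF h this] have 2: "dotL m (\<lambda>j. a' j $ i) z + (- axis i (1::real)) \<bullet> y \<le> - b $ i"
              unfolding fst_conv snd_conv .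
            show "dotL m (\<lambda>j. - (a' j $ i)) z + axis i (1::real) \<bullet> y \<le> b $ i \<and>
               dotL m (\<lambda>j. a' j $ i) z + (- axis i (1::real)) \<bullet> y \<le> - b $ i" using 1 2 by blast
          qed
        next
          assume h: "\<forall>i. dotL m (\<lambda>j. - (a' j $ i)) z + axis i (1::real) \<bullet> y \<le> b $ i \<and>
               dotL m (\<lambda>j. a' j $ i) z + (- axis i (1::real)) \<bullet> y \<le> - b $ i"
          show "\<forall>k\<in>E2 \<union> E3. dotL m (fst k) z + fst (snd k) \<bullet> y \<le> snd (snd k)"
          proof
            fix k assume "k \<in> E2 \<union> E3"
            then obtain i where "k = ((\<lambda>j. - (a' j $ i)), axis i (1::real), b $ i) \<or>
                k = ((\<lambda>j. a' j $ i), - axis i (1::real), - (b $ i))" unfolding E2_def E3_def by auto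
            then show "dotL m (fst k) z + fst (snd k) \<bullet> y \<le> snd (snd k)"
              using h[rule_format, of i] by (elim disjE) (simp only: fst_conv snd_conv)+
          qed
        qed
        then show ?thesis unfolding e2 e3 by simp
      qed
      finally show ?thesis .
    qed
    note eq = this
    have E1c: "(\<forall>k\<in>E1. dotL m (fst k) z + fst (snd k) \<bullet> y \<le> snd (snd k)) \<longleftrightarrow> (\<forall>k\<in>H'. dotL m (fst k) z \<le> snd k)"
      for z y unfolding E1_def by auto
    show ?thesis
    proof (rule set_eqI)
      fix y
      have "y \<in> K \<longleftrightarrow> (\<exists>z\<in>RL m. (\<forall>k\<in>H'. dotL m (fst k) z \<le> snd k) \<and> y = affmap m a' b z)"
        unfolding Kimg Q'_def PH_def by auto
      also have "\<dots> \<longleftrightarrow> (\<exists>z\<in>RL m. (\<forall>k\<in>E1. dotL m (fst k) z + fst (snd k) \<bullet> y \<le> snd (snd k)) \<and>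
          (\<forall>k\<in>E2 \<union> E3. dotL m (fst k) z + fst (snd k) \<bullet> y \<le> snd (snd k)))"
        unfolding E1c eq ..
      also have "\<dots> \<longleftrightarrow> y \<in> FMset m (E1 \<union> E2 \<union> E3)" unfolding FMset_def by auto
      finally show "y \<in> K \<longleftrightarrow> y \<in> FMset m (E1 \<union> E2 \<union> E3)" .
    qed
  qed
  moreover have "finite (E1 \<union> E2 \<union> E3)" unfolding E1_def E2_def E3_def using fH' by auto
  ultimately have "polyhedron K" using FM_polyhedron by metis
  with xcb show ?thesis by simp
qed


definition cube :: "(real ^ 'd) set" where "cube = {x. \<forall>i. 0 \<le> x $ i \<and> x $ i \<le> 1}"
definition orth :: "(real ^ 'd) set" where "orth = {x. \<forall>i. 0 \<le> x $ i}"

lemma convex_cube: "convex (cube :: (real ^ 'd) set)"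
proof -
  have "cube = cbox (0 :: real ^ 'd) 1" by (auto simp: cube_def mem_box_cart)
  then show ?thesis by (metis convex_box(1))
qed

lemma in_upI: "p \<in> P \<Longrightarrow> \<forall>i. 0 \<le> v $ i \<Longrightarrow> p + v \<in> up P"
  unfolding up_def by blast

lemma in_upI0: "p \<in> P \<Longrightarrow> p \<in> up P"
  using in_upI[of p P 0] by simp

lemma up_sums: "up P = (\<Union>x\<in>orth. \<Union>y\<in>P. {x + y})"
  unfolding up_def orth_def by (auto simp: add.commute) (metis add.commute)

lemma up_closed_convex:
  assumes "zero_one_polytope P"
  shows "closed (up P)" "convex (up P)"
proof -
  obtain S where S: "finite S" "P = convex hull S" using assms unfolding zero_one_polytope_def by auto
  have cP: "compact P" "convex P" using S by (auto intro: compact_convex_hull finite_imp_compact)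
  have co: "convex (orth :: (real ^ 'd) set)"
    unfolding convex_def orth_def by (auto intro!: add_nonneg_nonneg mult_nonneg_nonneg)
  show "closed (up P)" unfolding up_sums
    by (rule closed_compact_sums[OF _ cP(1)]) (simp add: orth_def closed_positive_orthant)
  show "convex (up P)" unfolding up_sums using convex_sums[OF co cP(2)] .
qed

lemma inner_nonneg_orth: "(\<forall>i. 0 \<le> a $ i) \<Longrightarrow> (\<forall>i. 0 \<le> x $ i) \<Longrightarrow> 0 \<le> a \<bullet> (x :: real ^ 'd)"
  unfolding inner_vec_def by (auto intro!: sum_nonneg)

lemma core:
  fixes P :: "(real ^ 'd) set" and R :: "(real ^ 'd) set"
  assumes zo: "zero_one_polytope P" and Pne: "P \<noteq> {}" and eps: "0 < \<epsilon>" "\<epsilon> < 1"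
    and CR: "up P \<inter> cube \<subseteq> R"
    and rd: "rdist (up P \<inter> cube) R \<le> ereal (\<epsilon> / real CARD('d))"
    and uR: "u \<in> R" and u0: "\<forall>i. 0 \<le> u $ i"
  shows "u \<in> (\<lambda>x. (1 - \<epsilon>) *\<^sub>R x) ` up P"
proof (rule ccontr)
  define n where "n = real CARD('d)"
  have n0: "n > 0" unfolding n_def by simp
  define C where "C = up P \<inter> cube"
  define D where "D = (\<lambda>x. (1 - \<epsilon>) *\<^sub>R x) ` up P"
  assume "u \<notin> (\<lambda>x. (1 - \<epsilon>) *\<^sub>R x) ` up P"
  then have uD: "u \<notin> D" unfolding D_def .
  obtain S where S: "finite S" "\<forall>x\<in>S. \<forall>i. x $ i = 0 \<or> x $ i = 1" "P = convex hull S"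
    using zo unfolding zero_one_polytope_def by auto
  have cD: "closed D" "convex D" unfolding D_def using up_closed_convex[OF zo]
    by (auto intro: closed_scaling convex_scaling)
  obtain a \<beta> where ab: "a \<bullet> u < \<beta>" "\<forall>x\<in>D. \<beta> < a \<bullet> x"
    using separating_hyperplane_closed_point[OF cD(2) cD(1) uD] by auto
  obtain p0 where p0: "p0 \<in> P" using Pne by auto
  have p0up: "p0 \<in> up P" using p0 by (rule in_upI0)
  have a0: "0 \<le> a $ i" for i
  proof (rule ccontr)
    assume neg: "\<not> 0 \<le> a $ i"
    define d0 where "d0 = (1 - \<epsilon>) *\<^sub>R p0"
    define t where "t = (a \<bullet> d0 - \<beta>) / (- a $ i) + 1"
    have d0D: "d0 \<in> D" unfolding D_def d0_def using p0up by auto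
    have tpos: "t > 0" using ab(2) d0D neg unfolding t_def by (auto intro!: add_nonneg_pos divide_nonneg_pos)
    have "d0 + t *\<^sub>R axis i 1 = (1 - \<epsilon>) *\<^sub>R (p0 + (t / (1 - \<epsilon>)) *\<^sub>R axis i 1)"
    proof -
      have e: "(1 - \<epsilon>) * (t / (1 - \<epsilon>)) = t" using eps by simp
      show ?thesis unfolding d0_def scaleR_add_right scaleR_scaleR e ..
    qed
    moreover have "p0 + (t / (1 - \<epsilon>)) *\<^sub>R axis i 1 \<in> up P"
      using p0 tpos eps by (intro in_upI) (auto simp: axis_def)
    ultimately have "d0 + t *\<^sub>R axis i 1 \<in> D" unfolding D_def by auto
    then have "\<beta> < a \<bullet> (d0 + t *\<^sub>R axis i 1)" using ab(2) by auto
    also have "a \<bullet> (d0 + t *\<^sub>R axis i 1) = a \<bullet> d0 + t * a $ i" by (simp add: inner_add_right inner_axis)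
    also have "\<dots> = \<beta> + a $ i" unfolding t_def using neg by (simp add: field_simps)
    finally show False using neg by simp
  qed
  have au0: "0 \<le> a \<bullet> u" using a0 u0 by (intro inner_nonneg_orth) auto
  define \<delta> where "\<delta> = \<beta> / (1 - \<epsilon>)"
  have dpos: "\<delta> > 0" unfolding \<delta>_def using ab(1) au0 eps by auto
  have bd: "\<beta> = (1 - \<epsilon>) * \<delta>" unfolding \<delta>_def using eps by simp
  have aS: "a \<bullet> s > \<delta>" if "s \<in> S" for s
  proof -
    have "S \<subseteq> convex hull S" by (rule hull_subset)
    then have "s \<in> P" using that S(3) by auto
    then have "s \<in> up P" by (rule in_upI0)
    then have "(1 - \<epsilon>) *\<^sub>R s \<in> D" unfolding D_def by auto
    then have "\<beta> < (1 - \<epsilon>) * (a \<bullet> s)" using ab(2) by auto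
    then have "(1 - \<epsilon>) * \<delta> < (1 - \<epsilon>) * (a \<bullet> s)" using bd by simp
    then show ?thesis using eps by (simp add: mult_less_cancel_left_pos)
  qed
  define c where "c = (\<chi> i. min (a $ i) \<delta>)"
  have c0: "0 \<le> c $ i" for i unfolding c_def using a0 dpos by simp
  have cd: "c $ i \<le> \<delta>" for i unfolding c_def by simp
  have cS: "c \<bullet> s \<ge> \<delta>" if sS: "s \<in> S" for s
  proof (cases "\<exists>i. s $ i = 1 \<and> a $ i \<ge> \<delta>")
    case True
    then obtain i where i: "s $ i = 1" "a $ i \<ge> \<delta>" by auto
    have s0: "0 \<le> s $ j" for j using S(2) sS by (metis order_refl zero_le_one)
    have "\<delta> = c $ i * s $ i" using i unfolding c_def by simp
    also have "\<dots> \<le> (\<Sum>j\<in>UNIV. c $ j * s $ j)"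
      by (rule member_le_sum) (auto intro: mult_nonneg_nonneg c0 s0)
    finally show ?thesis unfolding inner_vec_def by simp
  next
    case False
    have cj: "c $ j * s $ j = a $ j * s $ j" for j
    proof (cases "s $ j = 0")
      case False2: False
      then have "s $ j = 1" using S(2) sS by blast
      then have "a $ j < \<delta>" using False by auto
      then show ?thesis unfolding c_def by simp
    qed (simp)
    have "c \<bullet> s = a \<bullet> s" unfolding inner_vec_def by (rule sum.cong[OF refl]) (simp add: cj)
    then show ?thesis using aS[OF sS] by simp
  qed
  have cup: "c \<bullet> x \<ge> \<delta>" if xu: "x \<in> up P" for x
  proof -
    obtain p v where pv: "x = p + v" "p \<in> P" "\<forall>i. 0 \<le> v $ i" using xu unfolding up_def by blast
    have "P \<subseteq> {x. c \<bullet> x \<ge> \<delta>}" unfolding S(3)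
      by (rule hull_minimal) (use cS convex_halfspace_ge in auto)
    then have "c \<bullet> p \<ge> \<delta>" using pv by auto
    moreover have "c \<bullet> v \<ge> 0" using c0 pv(3) by (intro inner_nonneg_orth) auto
    ultimately show ?thesis unfolding pv(1) by (simp add: inner_add_right)
  qed
  have cC: "0 \<le> c \<bullet> x \<and> c \<bullet> x \<le> n * \<delta>" if "x \<in> C" for x
  proof
    have x01: "0 \<le> x $ i" "x $ i \<le> 1" for i using that unfolding C_def cube_def by auto
    show "0 \<le> c \<bullet> x" using c0 x01 by (intro inner_nonneg_orth) auto
    have "c \<bullet> x = (\<Sum>i\<in>UNIV. c $ i * x $ i)" unfolding inner_vec_def by simp
    also have "\<dots> \<le> (\<Sum>i\<in>(UNIV::'d set). \<delta>)"
    proof (rule sum_mono)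
      fix i :: 'd
      have "c $ i * x $ i \<le> c $ i * 1" using c0 x01 by (intro mult_left_mono) auto
      then show "c $ i * x $ i \<le> \<delta>" using cd[of i] by simp
    qed
    also have "\<dots> = n * \<delta>" unfolding n_def by simp
    finally show "c \<bullet> x \<le> n * \<delta>" .
  qed
  have cu: "c \<bullet> u < (1 - \<epsilon>) * \<delta>"
  proof -
    have "c \<bullet> u \<le> a \<bullet> u" unfolding inner_vec_def
      by (rule sum_mono) (use u0 in \<open>auto simp: c_def intro!: mult_right_mono\<close>)
    then show ?thesis using ab(1) bd by simp
  qed
  define num where "num = (SUP b\<in>R. INF a\<in>C. ereal \<bar>c \<bullet> b - c \<bullet> a\<bar>)"
  define den where "den = (SUP p\<in>C \<times> C. ereal \<bar>c \<bullet> fst p - c \<bullet> snd p\<bar>)"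
  have "rdist_ratio c C R \<le> rdist C R" unfolding rdist_def by (rule SUP_upper) simp
  then have rr: "rdist_ratio c C R \<le> ereal (\<epsilon> / n)" using rd unfolding C_def n_def by simp
  have Cne: "C \<noteq> {}"
  proof -
    have "p0 \<in> cube"
    proof -
      have "S \<subseteq> cube" unfolding cube_def
      proof (rule subsetI, rule CollectI, rule allI)
        fix x i assume "x \<in> S"
        then have "x $ i = 0 \<or> x $ i = 1" using S(2) by blast
        then show "0 \<le> x $ i \<and> x $ i \<le> 1" by auto
      qed
      then have "P \<subseteq> cube" unfolding S(3) by (rule hull_minimal) (rule convex_cube)
      then show ?thesis using p0 by auto
    qed
    then show ?thesis unfolding C_def using p0up by auto
  qed
  have den_le: "den \<le> ereal (n * \<delta>)" unfolding den_def
  proof (rule SUP_least)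
    fix p assume "p \<in> C \<times> C"
    then have "0 \<le> c \<bullet> fst p \<and> c \<bullet> fst p \<le> n * \<delta>" "0 \<le> c \<bullet> snd p \<and> c \<bullet> snd p \<le> n * \<delta>" using cC by auto
    then show "ereal \<bar>c \<bullet> fst p - c \<bullet> snd p\<bar> \<le> ereal (n * \<delta>)" by auto
  qed
  have den_ge: "den \<ge> 0"
  proof -
    obtain x where "x \<in> C" using Cne by auto
    then have "ereal \<bar>c \<bullet> fst (x, x) - c \<bullet> snd (x, x)\<bar> \<le> den" unfolding den_def by (intro SUP_upper) auto
    then show ?thesis by (simp add: zero_ereal_def)
  qed
  have num_ge: "num \<ge> ereal (\<delta> - c \<bullet> u)"
  proof -
    have "ereal (\<delta> - c \<bullet> u) \<le> (INF a\<in>C. ereal \<bar>c \<bullet> u - c \<bullet> a\<bar>)"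
    proof (rule INF_greatest)
      fix x assume "x \<in> C"
      then have "c \<bullet> x \<ge> \<delta>" using cup unfolding C_def by auto
      then show "ereal (\<delta> - c \<bullet> u) \<le> ereal \<bar>c \<bullet> u - c \<bullet> x\<bar>" by auto
    qed
    also have "\<dots> \<le> num" unfolding num_def using uR by (rule SUP_upper)
    finally show ?thesis .
  qed
  have gap: "\<delta> - c \<bullet> u > \<epsilon> * \<delta>" using cu by (simp add: algebra_simps)
  have gpos: "\<epsilon> * \<delta> > 0" using eps dpos by simp
  have numne: "num \<noteq> 0" using num_ge gap gpos by (metis ereal_less_eq(3) linorder_not_le order_less_trans zero_ereal_def)
  have rdef: "rdist_ratio c C R = (if den = \<infinity> then 0 else if den = 0 then (if num = 0 then 0 else \<infinity>) else num / den)"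
    unfolding rdist_ratio_def num_def den_def Let_def ..
  have dfin: "den \<noteq> \<infinity>" using den_le by auto
  show False
  proof (cases "den = 0")
    case True
    then have "rdist_ratio c C R = \<infinity>" using rdef dfin numne by simp
    then show False using rr by simp
  next
    case False
    obtain D0 where D0: "den = ereal D0" using den_ge dfin by (cases den) auto
    have D0pos: "D0 > 0" using D0 den_ge False by auto
    have D0le: "D0 \<le> n * \<delta>" using D0 den_le by simp
    have "rdist_ratio c C R = num / ereal D0" using rdef dfin False D0 by simp
    also have "\<dots> \<ge> ereal (\<delta> - c \<bullet> u) / ereal D0" using num_ge D0pos by (intro ereal_divide_right_mono) auto
    finally have "ereal (\<delta> - c \<bullet> u) / ereal D0 \<le> rdist_ratio c C R" .
    then have h: "ereal ((\<delta> - c \<bullet> u) / D0) \<le> rdist_ratio c C R" using D0pos by simp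
    from order_trans[OF h rr] have le1: "(\<delta> - c \<bullet> u) / D0 \<le> \<epsilon> / n" by simp
    have "\<epsilon> / n = (\<epsilon> * \<delta>) / (n * \<delta>)" using dpos by simp
    also have "\<dots> \<le> (\<epsilon> * \<delta>) / D0" using D0pos D0le gpos by (intro divide_left_mono) auto
    also have "\<dots> < (\<delta> - c \<bullet> u) / D0" using gap D0pos by (intro divide_strict_right_mono) auto
    finally show False using le1 by simp
  qed
qed


lemma P_cube: "zero_one_polytope P \<Longrightarrow> P \<subseteq> cube"
proof -
  assume "zero_one_polytope P"
  then obtain S where S: "finite S" "\<forall>x\<in>S. \<forall>i. x $ i = 0 \<or> x $ i = 1" "P = convex hull S"
    unfolding zero_one_polytope_def by auto
  have "S \<subseteq> cube" unfolding cube_def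
  proof (rule subsetI, rule CollectI, rule allI)
    fix x i assume "x \<in> S"
    then have "x $ i = 0 \<or> x $ i = 1" using S(2) by blast
    then show "0 \<le> x $ i \<and> x $ i \<le> 1" by auto
  qed
  then show "P \<subseteq> cube" unfolding S(3) by (rule hull_minimal) (rule convex_cube)
qed

lemma xc_empty: "xc {} = 0"
proof -
  define Q0 where "Q0 = PH 0 {((\<lambda>_. 0), -1)}"
  have Q0e: "Q0 = {}" unfolding Q0_def PH_def by (auto simp: dotL_def)
  have pQ: "polyhedronL 0 Q0" unfolding polyhedronL_PH Q0_def by auto
  have nf: "nfacets 0 Q0 = 0"
  proof -
    have "{F. facetL 0 F Q0} = {}" unfolding Q0e facetL_def faceL_def by auto
    then show ?thesis unfolding nfacets_def by simp
  qed
  have "xc ({} :: (real ^ 'd) set) \<le> nfacets 0 Q0"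
    by (rule xc_le[OF pQ]) (simp add: Q0e)
  then show ?thesis using nf by simp
qed

theorem mainTheorem14:
  fixes P :: "(real ^ 'd) set" and \<epsilon> M :: real
  assumes "zero_one_polytope P"
    and "0 < \<epsilon>" and "\<epsilon> < 1" and "0 < M"
    and "\<And>K. polyhedron K \<Longrightarrow> up P \<subseteq> K \<Longrightarrow> K \<subseteq> (\<lambda>x. (1 - \<epsilon>) *\<^sub>R x) ` up P
          \<Longrightarrow> real (xc K) \<ge> M"
  shows "\<not> (\<exists>l Q a b. is_LEF (\<epsilon> / real CARD('d)) (up P \<inter> {x. \<forall>i. 0 \<le> x $ i \<and> x $ i \<le> 1}) l Q a b
              \<and> real (nfacets l Q) < M - 3 * real CARD('d))"
proof
  assume "\<exists>l Q a b. is_LEF (\<epsilon> / real CARD('d)) (up P \<inter> {x. \<forall>i. 0 \<le> x $ i \<and> x $ i \<le> 1}) l Q a b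
              \<and> real (nfacets l Q) < M - 3 * real CARD('d)"
  then obtain l Q a b where lef: "is_LEF (\<epsilon> / real CARD('d)) (up P \<inter> cube) l Q a b"
    and sz: "real (nfacets l Q) < M - 3 * real CARD('d)"
    unfolding cube_def by blast
  have pQ: "polyhedronL l Q" and CR: "up P \<inter> cube \<subseteq> affmap l a b ` Q"
    and rd: "rdist (up P \<inter> cube) (affmap l a b ` Q) \<le> ereal (\<epsilon> / real CARD('d))"
    using lef unfolding is_LEF_def by auto
  show False
  proof (cases "P = {}")
    case True
    then have "up P = {}" unfolding up_def by auto
    then have "real (xc ({} :: (real ^ 'd) set)) \<ge> M" using assms(5)[of "{}"] by simp
    moreover have "xc ({} :: (real ^ 'd) set) = 0" by (rule xc_empty)
    ultimately show False using assms(4) by simp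
  next
    case False
    define K where "K = {affmap l a b x + w | x w. x \<in> Q \<and> (\<forall>i. 0 \<le> affmap l a b x $ i) \<and> (\<forall>i. 0 \<le> w $ i)}"
    have cK: "polyhedron K \<and> xc K \<le> nfacets l Q + 2 * CARD('d)"
      unfolding K_def by (rule construction[OF pQ])
    have sub1: "up P \<subseteq> K"
    proof
      fix y assume "y \<in> up P"
      then obtain p v where pv: "y = p + v" "p \<in> P" "\<forall>i. 0 \<le> v $ i" unfolding up_def by blast
      have "p \<in> up P \<inter> cube" using pv(2) P_cube[OF assms(1)] in_upI0[of p P] by auto
      then obtain x where x: "x \<in> Q" "p = affmap l a b x" using CR by auto
      have "\<forall>i. 0 \<le> affmap l a b x $ i" using \<open>p \<in> up P \<inter> cube\<close> x(2) unfolding cube_def by auto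
      then show "y \<in> K" unfolding K_def using pv x by blast
    qed
    have sub2: "K \<subseteq> (\<lambda>x. (1 - \<epsilon>) *\<^sub>R x) ` up P"
    proof
      fix y assume "y \<in> K"
      then obtain x w where xw: "y = affmap l a b x + w" "x \<in> Q" "\<forall>i. 0 \<le> affmap l a b x $ i" "\<forall>i. 0 \<le> w $ i"
        unfolding K_def by blast
      have "affmap l a b x \<in> (\<lambda>x. (1 - \<epsilon>) *\<^sub>R x) ` up P"
        by (rule core[OF assms(1) False assms(2,3) CR rd]) (use xw in auto)
      then obtain z where z: "z \<in> up P" "affmap l a b x = (1 - \<epsilon>) *\<^sub>R z" by auto
      then obtain p v where pv: "z = p + v" "p \<in> P" "\<forall>i. 0 \<le> v $ i" unfolding up_def by blast
      define v' where "v' = v + (1 / (1 - \<epsilon>)) *\<^sub>R w"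
      have v'0: "\<forall>i. 0 \<le> v' $ i" unfolding v'_def using pv(3) xw(4) assms(3) by auto
      have "y = (1 - \<epsilon>) *\<^sub>R (p + v')"
      proof -
        have e: "(1 - \<epsilon>) * (1 / (1 - \<epsilon>)) = 1" using assms(3) by simp
        show ?thesis unfolding xw(1) z(2) pv(1) v'_def scaleR_add_right scaleR_scaleR e by simp
      qed
      moreover have "p + v' \<in> up P" using pv(2) v'0 by (rule in_upI)
      ultimately show "y \<in> (\<lambda>x. (1 - \<epsilon>) *\<^sub>R x) ` up P" by auto
    qed
    have "M \<le> real (xc K)" using assms(5)[OF _ sub1 sub2] cK by auto
    also have "\<dots> \<le> real (nfacets l Q) + 2 * real CARD('d)" using cK by linarith
    finally show False using sz by simp
  qed
qed

end
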